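(* Let $C\subseteq\mathbb{R}^n$ be a nonempty closed convex set and let $f:\mathbb{R}^n\times\mathbb{R}^n\to\mathbb{R}\cup\{+\infty\}$ satisfy $f(x,x)=0$ for all $x\in C$ and $C\times C\subseteq \operatorname{dom} f$. Let $S(EP)$ denote the set of $x^*\in C$ with $f(x^*,y)\ge 0$ for all $y\in C$. Assume: (A1) for every $x\in C$ the function $f(x,\cdot)$ is quasiconvex, and $f$ is upper semicontinuous on an open set containing $C\times C$; (A2) $f$ is pseudomonotone on $C$, i.e. for all $x,y\in C$, $f(x,y)\ge 0\Rightarrow f(y,x)\le 0$; and $f$ is paramonotone on $C$ with respect to $S(EP)$, i.e. if $x\in S(EP)$, $y\in C$ and $f(x,y)=f(y,x)=0$, then $y\in S(EP)$; (A3) $S(EP)\neq\emptyset$. Suppose the Normal-subgradient method described in the context does not terminate, let $\{x^k\}$ be the infinite sequence it generates, and let $\{x^{k_q}\}$ be the subsequence of $\{x^k\}$ consisting of all iterates belonging to $S(EP)$. Then: (a) if $\{x^{k_q}\}$ is infinite, then $\lim_{k\to\infty} d(x^k,S(EP))=0$; (b) if $\{x^{k_q}\}$ is finite, then $\{x^k\}$ converges to a point of $S(EP)$.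
   Context: A function $\varphi$ is quasiconvex if $\varphi((1-\lambda)x+\lambda y)\le\max\{\varphi(x),\varphi(y)\}$ for all $x,y$ and $\lambda\in[0,1]$. $d(x,S)$ is the Euclidean distance from $x$ to the set $S$. For $x\in C$ let $L_f(x):=\{y\in\mathbb{R}^n: f(x,y)<f(x,x)=0\}$ and $\partial_2^* f(x,x):=\{g\in\mathbb{R}^n:\ \langle g,y-x\rangle<0 \ \text{for all } y\in L_f(x)\}$. $P_C$ denotes the Euclidean projection onto $C$. Normal-subgradient method: fix a real sequence $\{\alpha_k\}$ with $\alpha_k>0$ for all $k$, $\sum_{k}\alpha_k=+\infty$ and $\sum_k\alpha_k^2<+\infty$. Choose $x^0\in C$. At iteration $k$ (with $x^k\in C$): take $g^k\in\partial_2^* f(x^k,x^k)$; if $g^k=0$, stop; otherwise replace $g^k$ by $g^k/\|g^k\|$ (so $\|g^k\|=1$), and set $x^{k+1}=P_C(x^k-\alpha_k g^k)$; if $x^{k+1}=x^k$, stop; otherwise increase $k$ by one and repeat. *)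

theory Defs
  imports "HOL-Analysis.Analysis"
begin

definition quasiconvex :: "('a::real_vector \<Rightarrow> ereal) \<Rightarrow> bool" where
  "quasiconvex \<phi> \<longleftrightarrow>
     (\<forall>x y. \<forall>l::real. 0 \<le> l \<and> l \<le> 1 \<longrightarrow> \<phi> ((1 - l) *\<^sub>R x + l *\<^sub>R y) \<le> max (\<phi> x) (\<phi> y))"

definition usc_at :: "('a::topological_space \<Rightarrow> ereal) \<Rightarrow> 'a \<Rightarrow> bool" where
  "usc_at F p \<longleftrightarrow> (\<forall>c. F p < c \<longrightarrow> eventually (\<lambda>q. F q < c) (nhds p))"

definition sol_EP :: "'a set \<Rightarrow> ('a \<Rightarrow> 'a \<Rightarrow> ereal) \<Rightarrow> 'a set" where
  "sol_EP C f = {x \<in> C. \<forall>y \<in> C. f x y \<ge> 0}"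

definition lev_f :: "('a \<Rightarrow> 'a \<Rightarrow> ereal) \<Rightarrow> 'a \<Rightarrow> 'a set" where
  "lev_f f x = {y. f x y < f x x}"

definition normal_subdiff :: "('a::real_inner \<Rightarrow> 'a \<Rightarrow> ereal) \<Rightarrow> 'a \<Rightarrow> 'a set" where
  "normal_subdiff f x = {g. \<forall>y \<in> lev_f f x. inner g (y - x) < 0}"

end

theory Submission
  imports Defs "HOL-Library.Infinite_Set"
begin


lemma telesc:
  fixes a b e :: "nat \<Rightarrow> real"
  assumes "\<And>k. k \<ge> m \<Longrightarrow> a (Suc k) + b k \<le> a k + e k" "m \<le> n"
  shows "a n + sum b {m..<n} \<le> a m + sum e {m..<n}"
  using assms(2)
proof (induction n rule: dec_induct)
  case base then show ?case by simp
next
  case (step n) then show ?case using assms(1)[of n] by simp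
qed

theorem theorem1:
  fixes C :: "'a::euclidean_space set"
    and f :: "'a \<Rightarrow> 'a \<Rightarrow> ereal"
    and \<alpha> :: "nat \<Rightarrow> real"
    and x g :: "nat \<Rightarrow> 'a"
  assumes C_ne: "C \<noteq> {}" and C_closed: "closed C" and C_convex: "convex C"
    and f_not_minf: "\<And>u v. f u v \<noteq> -\<infinity>"
    and f_diag: "\<And>u. u \<in> C \<Longrightarrow> f u u = 0"
    and f_dom: "\<And>u v. u \<in> C \<Longrightarrow> v \<in> C \<Longrightarrow> f u v < \<infinity>"
    and A1_qc: "\<And>u. u \<in> C \<Longrightarrow> quasiconvex (f u)"
    and A1_usc: "\<exists>U. open U \<and> C \<times> C \<subseteq> U \<and> (\<forall>p \<in> U. usc_at (\<lambda>(u, v). f u v) p)"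
    and A2_pseudo: "\<And>u v. u \<in> C \<Longrightarrow> v \<in> C \<Longrightarrow> f u v \<ge> 0 \<Longrightarrow> f v u \<le> 0"
    and A2_para: "\<And>u v. u \<in> sol_EP C f \<Longrightarrow> v \<in> C \<Longrightarrow> f u v = 0 \<Longrightarrow> f v u = 0 \<Longrightarrow> v \<in> sol_EP C f"
    and A3: "sol_EP C f \<noteq> {}"
    and alpha_pos: "\<And>k. \<alpha> k > 0"
    and alpha_div: "\<not> summable \<alpha>"
    and alpha_sq: "summable (\<lambda>k. (\<alpha> k)\<^sup>2)"
    and x0: "x 0 \<in> C"
    and g_sub: "\<And>k. g k \<in> normal_subdiff f (x k)"
    and g_nz: "\<And>k. g k \<noteq> 0"
    and x_step: "\<And>k. x (Suc k) = closest_point C (x k - \<alpha> k *\<^sub>R (g k /\<^sub>R norm (g k)))"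
    and x_moves: "\<And>k. x (Suc k) \<noteq> x k"
  shows "(infinite {k. x k \<in> sol_EP C f} \<longrightarrow> (\<lambda>k. infdist (x k) (sol_EP C f)) \<longlonglongrightarrow> 0)
       \<and> (finite {k. x k \<in> sol_EP C f} \<longrightarrow> (\<exists>z \<in> sol_EP C f. x \<longlonglongrightarrow> z))"
proof -
  define S where "S = sol_EP C f"
  define u where "u k = g k /\<^sub>R norm (g k)" for k
  have nu: "norm (u k) = 1" for k using g_nz by (simp add: u_def)
  have uu: "inner (u k) (u k) = 1" for k using nu[of k] by (simp add: dot_square_norm)
  have xC: "x k \<in> C" for k
    by (induction k) (simp_all add: x0 x_step closest_point_in_set C_closed C_ne)
  have SC: "S \<subseteq> C" by (auto simp: S_def sol_EP_def)
  have KI: "(norm (x (Suc k) - y))\<^sup>2 \<le> (norm (x k - y))\<^sup>2 - 2 * \<alpha> k * inner (u k) (x k - y) + (\<alpha> k)\<^sup>2"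
    if "y \<in> C" for k y
  proof -
    have "dist (x (Suc k)) y \<le> dist (x k - \<alpha> k *\<^sub>R u k) y"
      using closest_point_lipschitz[OF C_convex C_closed C_ne, of "x k - \<alpha> k *\<^sub>R u k" y]
        closest_point_self[OF that]
      by (simp add: x_step u_def)
    hence "norm (x (Suc k) - y) \<le> norm ((x k - y) - \<alpha> k *\<^sub>R u k)"
      by (simp add: dist_norm algebra_simps)
    hence "(norm (x (Suc k) - y))\<^sup>2 \<le> (norm ((x k - y) - \<alpha> k *\<^sub>R u k))\<^sup>2"
      by (simp add: power_mono)
    also have "\<dots> = (norm (x k - y))\<^sup>2 - 2 * \<alpha> k * inner (u k) (x k - y) + (\<alpha> k)\<^sup>2 * inner (u k) (u k)"
      unfolding power2_norm_eq_inner by (simp add: inner_diff_left inner_diff_right inner_commute power2_eq_square algebra_simps)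
    finally show ?thesis using uu[of k] by simp
  qed
  have neg: "f v y < 0" if "v \<in> C" "v \<notin> S" "y \<in> S" for v y
  proof -
    have yC: "y \<in> C" using that SC by auto
    have ge: "f y v \<ge> 0" using that by (auto simp: S_def sol_EP_def)
    hence le: "f v y \<le> 0" using A2_pseudo yC that(1) by blast
    have "f v y \<noteq> 0"
    proof
      assume h: "f v y = 0"
      hence "f y v \<le> 0" using A2_pseudo[OF that(1) yC] by simp
      hence "f y v = 0" using ge by simp
      hence "v \<in> S" using A2_para[of y v] that h by (simp add: S_def)
      thus False using that by simp
    qed
    thus ?thesis using le by simp
  qed
  have innneg: "inner (u k) (x k - v) > 0" if "f (x k) v < 0" for k v
  proof -
    have "f (x k) v < f (x k) (x k)" using that f_diag[OF xC] by simp
    hence "v \<in> lev_f f (x k)" by (simp add: lev_f_def)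
    hence "inner (g k) (v - x k) < 0" using g_sub[of k] by (auto simp: normal_subdiff_def)
    hence "inner (g k) (x k - v) > 0" by (simp add: inner_diff_right)
    thus ?thesis using g_nz[of k] by (simp add: u_def)
  qed
  have pos: "inner (u k) (x k - y) > 0" if "y \<in> S" "x k \<notin> S" for k y
    using innneg neg[OF xC that(2,1)] by blast
  define s where "s = suminf (\<lambda>k. (\<alpha> k)\<^sup>2)"
  define P where "P n = sum (\<lambda>k. (\<alpha> k)\<^sup>2) {..<n}" for n
  have tail: "sum (\<lambda>i. (\<alpha> i)\<^sup>2) {m..<k} \<le> s - P m" if "m \<le> k" for m k
  proof -
    have "P k \<le> s" unfolding P_def s_def by (rule sum_le_suminf[OF alpha_sq]) auto
    moreover have "sum (\<lambda>i. (\<alpha> i)\<^sup>2) {m..<k} = P k - P m"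
      using sum_diff_nat_ivl[of 0 m k "\<lambda>i. (\<alpha> i)\<^sup>2"] that by (simp add: P_def lessThan_atLeast0)
    ultimately show ?thesis by simp
  qed
  have tail0: "\<exists>M. \<forall>m\<ge>M. s - P m < \<epsilon>" if eps: "\<epsilon> > 0" for \<epsilon>
  proof -
    have "P \<longlonglongrightarrow> s" unfolding P_def s_def using summable_LIMSEQ[OF alpha_sq] .
    then obtain M where "\<forall>m\<ge>M. norm (P m - s) < \<epsilon>" using LIMSEQ_D[OF _ eps] by blast
    thus ?thesis by (intro exI[of _ M]) (auto simp: abs_less_iff)
  qed
  have Pnn: "0 \<le> P m" for m by (simp add: P_def sum_nonneg)
  have partA: "(\<lambda>k. infdist (x k) S) \<longlonglongrightarrow> 0" if inf: "infinite {k. x k \<in> S}"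
  proof (rule LIMSEQ_I)
    fix r :: real assume r: "r > 0"
    obtain M where M: "\<forall>m\<ge>M. s - P m < r\<^sup>2" using tail0[of "r\<^sup>2"] r by auto
    obtain m where m: "m \<ge> M" "x m \<in> S" using inf unfolding infinite_nat_iff_unbounded_le by auto
    have ex: "\<exists>y\<in>S. (norm (x k - y))\<^sup>2 \<le> sum (\<lambda>i. (\<alpha> i)\<^sup>2) {m..<k}" if "k \<ge> m" for k
      using that
    proof (induction k rule: dec_induct)
      case base then show ?case using m by auto
    next
      case (step n)
      then obtain y where y: "y \<in> S" "(norm (x n - y))\<^sup>2 \<le> sum (\<lambda>i. (\<alpha> i)\<^sup>2) {m..<n}" by auto
      have sEq: "sum (\<lambda>i. (\<alpha> i)\<^sup>2) {m..<Suc n} = sum (\<lambda>i. (\<alpha> i)\<^sup>2) {m..<n} + (\<alpha> n)\<^sup>2"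
        using step(1) by simp
      have snn: "0 \<le> sum (\<lambda>i. (\<alpha> i)\<^sup>2) {m..<n}" by (simp add: sum_nonneg)
      show ?case
      proof (cases "x n \<in> S")
        case True
        have "dist (x (Suc n)) (x n) \<le> dist (x n - \<alpha> n *\<^sub>R u n) (x n)"
          using closest_point_lipschitz[OF C_convex C_closed C_ne, of "x n - \<alpha> n *\<^sub>R u n" "x n"]
            closest_point_self[OF xC[of n]]
          by (simp add: x_step u_def)
        also have "\<dots> = \<alpha> n" using nu[of n] alpha_pos[of n] by (simp add: dist_norm)
        finally have "norm (x (Suc n) - x n) \<le> \<alpha> n" by (simp add: dist_norm)
        hence "(norm (x (Suc n) - x n))\<^sup>2 \<le> (\<alpha> n)\<^sup>2" by (simp add: power_mono)
        then show ?thesis using True sEq snn by (intro bexI[of _ "x n"]) auto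
      next
        case False
        have "(norm (x (Suc n) - y))\<^sup>2 \<le> (norm (x n - y))\<^sup>2 + (\<alpha> n)\<^sup>2"
          using KI[of y n] pos[OF y(1) False] alpha_pos[of n] SC y(1)
          by (smt (verit, best) mult_pos_pos subsetD)
        then show ?thesis using y sEq by (intro bexI[of _ y]) auto
      qed
    qed
    show "\<exists>no. \<forall>n\<ge>no. norm (infdist (x n) S - 0) < r"
    proof (intro exI allI impI)
      fix n assume n: "n \<ge> m"
      obtain y where y: "y \<in> S" "(norm (x n - y))\<^sup>2 \<le> sum (\<lambda>i. (\<alpha> i)\<^sup>2) {m..<n}" using ex[OF n] by auto
      have "(norm (x n - y))\<^sup>2 < r\<^sup>2" using y(2) tail[OF n] M m(1) by fastforce
      hence "norm (x n - y) < r" using r by (smt (verit) power_mono norm_ge_zero)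
      moreover have "infdist (x n) S \<le> norm (x n - y)" using infdist_le[OF y(1)] by (simp add: dist_norm)
      moreover have "infdist (x n) S \<ge> 0" by (rule infdist_nonneg)
      ultimately show "norm (infdist (x n) S - 0) < r" by simp
    qed
  qed
  have partB: "\<exists>z\<in>S. x \<longlonglongrightarrow> z" if fin: "finite {k. x k \<in> S}"
  proof -
    obtain N0 where N0: "\<forall>n\<in>{k. x k \<in> S}. n \<le> N0" using fin unfolding finite_nat_set_iff_bounded_le by auto
    define N where "N = Suc N0"
    have notS: "x k \<notin> S" if "k \<ge> N" for k using N0 that N_def by force
    obtain xs where xs: "xs \<in> S" using A3 S_def by auto
    have xsC: "xs \<in> C" using xs SC by auto
    define h where "h k = inner (u k) (x k - xs)" for k
    define D where "D k = (norm (x k - xs))\<^sup>2" for k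
    have hpos: "h k > 0" if "k \<ge> N" for k using pos[OF xs notS[OF that]] by (simp add: h_def)
    have tel: "D k + sum (\<lambda>i. 2 * \<alpha> i * h i) {N..<k} \<le> D N + sum (\<lambda>i. (\<alpha> i)\<^sup>2) {N..<k}"
      if "k \<ge> N" for k
    proof (rule telesc[OF _ that])
      fix i show "D (Suc i) + 2 * \<alpha> i * h i \<le> D i + (\<alpha> i)\<^sup>2"
        using KI[OF xsC, of i] unfolding D_def h_def by linarith
    qed
    define B where "B = D N + s"
    have Dnn: "D k \<ge> 0" for k by (simp add: D_def)
    have Dbd: "D k \<le> B" if "k \<ge> N" for k
    proof -
      have "sum (\<lambda>i. 2 * \<alpha> i * h i) {N..<k} \<ge> 0"
        using hpos alpha_pos by (intro sum_nonneg) (simp add: less_imp_le)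
      thus ?thesis using tel[OF that] tail[OF that] Pnn[of N] by (simp add: B_def)
    qed
    have Sbd: "sum (\<lambda>i. 2 * \<alpha> i * h i) {N..<k} \<le> B" if "k \<ge> N" for k
      using tel[OF that] tail[OF that] Pnn[of N] Dnn[of k] by (simp add: B_def)
    have freq: "\<exists>k\<ge>K. h k < \<delta>" if dpos: "\<delta> > 0" for \<delta> K
    proof (rule ccontr)
      assume "\<not> (\<exists>k\<ge>K. h k < \<delta>)"
      hence hge: "\<And>k. k \<ge> K \<Longrightarrow> h k \<ge> \<delta>" by (meson not_less)
      define K' where "K' = max K N"
      have bd: "sum \<alpha> {..<n} \<le> sum \<alpha> {..<K'} + B / (2 * \<delta>)" for n
      proof (cases "n \<le> K'")
        case True
        have "sum \<alpha> {..<n} \<le> sum \<alpha> {..<K'}"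
          using True alpha_pos by (intro sum_mono2) (auto simp: less_imp_le)
        moreover have "B \<ge> 0" using Dbd[of N] Dnn[of N] by simp
        moreover have "B / (2 * \<delta>) \<ge> 0" using \<open>B \<ge> 0\<close> dpos by simp
        ultimately show ?thesis by linarith
      next
        case False
        have split: "sum \<alpha> {..<n} = sum \<alpha> {..<K'} + sum \<alpha> {K'..<n}"
          using False sum_diff_nat_ivl[of 0 K' n \<alpha>] by (simp add: lessThan_atLeast0)
        have "2 * \<delta> * sum \<alpha> {K'..<n} = sum (\<lambda>i. 2 * \<delta> * \<alpha> i) {K'..<n}"
          by (simp add: sum_distrib_left)
        also have "\<dots> \<le> sum (\<lambda>i. 2 * \<alpha> i * h i) {K'..<n}"
        proof (rule sum_mono)
          fix i assume "i \<in> {K'..<n}"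
          hence "h i \<ge> \<delta>" using hge K'_def by auto
          thus "2 * \<delta> * \<alpha> i \<le> 2 * \<alpha> i * h i" using alpha_pos[of i]
            by (simp add: mult_left_mono mult.commute)
        qed
        also have "\<dots> \<le> sum (\<lambda>i. 2 * \<alpha> i * h i) {N..<n}"
          using False K'_def hpos alpha_pos
          by (intro sum_mono2) (auto simp: less_imp_le)
        also have "\<dots> \<le> B" using Sbd False K'_def by simp
        finally have "sum \<alpha> {K'..<n} \<le> B / (2 * \<delta>)" using dpos
          by (simp add: pos_le_divide_eq mult.commute)
        thus ?thesis using split by simp
      qed
      have "summable \<alpha>"
        by (rule summableI_nonneg_bounded[OF _ bd]) (simp add: less_imp_le alpha_pos)
      thus False using alpha_div by simp
    qed
    have "\<forall>m. \<exists>k. k \<ge> N + m \<and> h k < 1 / real (Suc m)"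
      using freq by simp
    then obtain r where r: "\<And>m. r m \<ge> N + m" "\<And>m. h (r m) < 1 / real (Suc m)" by metis
    have "bounded (range (x \<circ> r))"
    proof -
      have "(x \<circ> r) m \<in> cball xs (sqrt B)" for m
      proof -
        have "(norm (x (r m) - xs))\<^sup>2 \<le> B" using Dbd[of "r m"] r(1)[of m] by (simp add: D_def)
        hence "norm (x (r m) - xs) \<le> sqrt B" by (simp add: real_le_rsqrt)
        thus ?thesis by (simp add: dist_norm norm_minus_commute)
      qed
      thus ?thesis by (meson bounded_cball bounded_subset image_subsetI)
    qed
    then obtain l \<sigma> where \<sigma>: "strict_mono \<sigma>" and lim: "(x \<circ> r \<circ> \<sigma>) \<longlonglongrightarrow> l"
      using bounded_imp_convergent_subsequence by (metis comp_assoc)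
    have lim': "(\<lambda>j. x (r (\<sigma> j))) \<longlonglongrightarrow> l" using lim by (simp add: o_def)
    have lC: "l \<in> C" by (rule closed_sequentially[OF C_closed _ lim']) (simp add: xC)
    have lS: "l \<in> S"
    proof (rule ccontr)
      assume lnS: "l \<notin> S"
      have fneg: "f l xs < 0" using neg[OF lC lnS xs] .
      obtain U where U: "open U" "C \<times> C \<subseteq> U" "\<forall>p\<in>U. usc_at (\<lambda>(u, v). f u v) p"
        using A1_usc by auto
      have "usc_at (\<lambda>(u, v). f u v) (l, xs)" using U lC xsC by auto
      hence "eventually (\<lambda>q. (\<lambda>(u, v). f u v) q < 0) (nhds (l, xs))"
        unfolding usc_at_def using fneg by auto
      then obtain d where d: "d > 0" "\<And>q. dist q (l, xs) < d \<Longrightarrow> (\<lambda>(u, v). f u v) q < 0"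
        unfolding eventually_nhds_metric by auto
      have hbig: "h k > d / 4" if dk: "dist (x k) l < d / 2" for k
      proof -
        define v where "v = xs + (d / 4) *\<^sub>R u k"
        have dv: "dist v xs = d / 4" using nu[of k] d(1) by (simp add: v_def dist_norm)
        have a: "(dist (x k) l)\<^sup>2 < (d/2)\<^sup>2"
          using dk by (simp add: power_strict_mono)
        have "(dist (x k) l)\<^sup>2 + (dist v xs)\<^sup>2 < d\<^sup>2"
        proof -
          have "(dist v xs)\<^sup>2 = d\<^sup>2 / 16" unfolding dv by (simp add: power_divide)
          moreover have "(d/2)\<^sup>2 = d\<^sup>2 / 4" by (simp add: power_divide)
          moreover have "d\<^sup>2 > 0" using d(1) by simp
          ultimately show ?thesis using a by linarith
        qed
        hence "dist (x k, v) (l, xs) < d"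
          unfolding dist_Pair_Pair using d(1) by (simp add: real_sqrt_less_iff real_less_lsqrt)
        hence "f (x k) v < 0" using d(2) by fastforce
        hence "inner (u k) (x k - v) > 0" by (rule innneg)
        moreover have "inner (u k) (x k - v) = h k - d / 4"
          using uu[of k] by (simp add: v_def h_def inner_diff_right inner_add_right algebra_simps)
        ultimately show ?thesis by simp
      qed
      obtain M1 where M1: "\<And>j. j \<ge> M1 \<Longrightarrow> dist (x (r (\<sigma> j))) l < d / 2"
        using lim' d(1) unfolding lim_sequentially by (metis half_gt_zero)
      obtain M2 where M2: "inverse (real (Suc M2)) < d / 4"
        using reals_Archimedean d(1) by (metis zero_less_divide_iff zero_less_numeral)
      define j where "j = max M1 M2"
      have "h (r (\<sigma> j)) > d / 4" using hbig M1 j_def by simp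
      moreover have "h (r (\<sigma> j)) < 1 / real (Suc (\<sigma> j))" using r(2) .
      moreover have "1 / real (Suc (\<sigma> j)) \<le> inverse (real (Suc M2))"
        using seq_suble[OF \<sigma>, of j] j_def by (simp add: inverse_eq_divide frac_le)
      ultimately show False using M2 by simp
    qed
    have conv: "x \<longlonglongrightarrow> l"
    proof (rule LIMSEQ_I)
      fix \<epsilon> :: real assume e: "\<epsilon> > 0"
      define Dl where "Dl k = (norm (x k - l))\<^sup>2" for k
      have telD: "Dl k + sum (\<lambda>i. 0) {m..<k} \<le> Dl m + sum (\<lambda>i. (\<alpha> i)\<^sup>2) {m..<k}"
        if "N \<le> m" "m \<le> k" for m k
      proof (rule telesc[OF _ that(2)])
        fix i assume "i \<ge> m"
        hence "x i \<notin> S" using notS that by simp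
        hence "inner (u i) (x i - l) > 0" using pos[OF lS] by simp
        thus "Dl (Suc i) + 0 \<le> Dl i + (\<alpha> i)\<^sup>2" using KI[OF lC, of i] alpha_pos[of i]
          unfolding Dl_def by (smt (verit) mult_pos_pos)
      qed
      obtain M1 where M1: "\<forall>m\<ge>M1. s - P m < \<epsilon>\<^sup>2 / 2" using tail0[of "\<epsilon>\<^sup>2/2"] e by auto
      obtain M2 where M2: "\<And>j. j \<ge> M2 \<Longrightarrow> dist (x (r (\<sigma> j))) l < \<epsilon> / 2"
        using lim' e unfolding lim_sequentially by (metis half_gt_zero)
      define j where "j = max M1 M2"
      define m where "m = r (\<sigma> j)"
      have mN: "m \<ge> N" and mM: "m \<ge> M1"
        using r(1)[of "\<sigma> j"] seq_suble[OF \<sigma>, of j] j_def m_def by auto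
      have Dm: "Dl m < \<epsilon>\<^sup>2 / 4"
      proof -
        have "norm (x m - l) < \<epsilon> / 2" using M2[of j] j_def m_def by (simp add: dist_norm)
        hence "(norm (x m - l))\<^sup>2 < (\<epsilon> / 2)\<^sup>2" by (simp add: power_strict_mono)
        thus ?thesis by (simp add: Dl_def power_divide)
      qed
      show "\<exists>no. \<forall>n\<ge>no. norm (x n - l) < \<epsilon>"
      proof (intro exI allI impI)
        fix n assume n: "n \<ge> m"
        have "Dl n \<le> Dl m + (s - P m)" using telD[OF mN n] tail[OF n] by simp
        also have "\<dots> < \<epsilon>\<^sup>2" using Dm M1[rule_format, OF mM] zero_less_power[OF e, of 2]
          by linarith
        finally have "(norm (x n - l))\<^sup>2 < \<epsilon>\<^sup>2" by (simp add: Dl_def)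
        thus "norm (x n - l) < \<epsilon>" using e by (smt (verit) power_mono norm_ge_zero)
      qed
    qed
    show ?thesis using lS conv by auto
  qed
  show ?thesis using partA partB by (simp add: S_def)
qed

end
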